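(* Let $\rho_p>0$, $\bar\rho_{ac}>0$, $\bar v_a>0$, $\bar u_d>0$, $C_D>0$, $\rho_{sn,p}>0$, $\Delta T^g_d\ge 0$, an integer $\delta\ge2$, and defender positions $\mathbf{R}_d=[\mathbf{r}_{d1},\dots,\mathbf{r}_{dN_d}]$ in $\mathbb{R}^3$ be given. For a unit vector $\mathbf{u}$, let $f_{\mathbf{u}}(R)=\bar\rho_{ac}+R+\bar v_a\big(\bar T_d(\bar\varrho_d(R))+\Delta T^g_d\big)$ with $\bar\varrho_d(R)=\big(\sum_{j}\|R\mathbf{u}-\mathbf{r}_{dj}\|^\delta\big)^{1/\delta}+\rho_{sn,p}$ and $\bar T_d$ as defined in the context, and suppose $\underline{R}_{ac}(\mathbf{u}):=\min_{R>\rho_p}f_{\mathbf{u}}(R)$ is attained at some $\hat R>\rho_p$. Let $T_a(\mathbf{r},\mathbf{p},\bar\rho_{ac})$ denote the minimum time for the attackers' center starting at $\mathbf{r}$ to reach within distance $\bar\rho_{ac}$ of $\mathbf{p}$, and let $T_d(\mathbf{R}_d,\mathbf{p})$ denote the maximum time needed by the defenders to achieve the planar gathering formation centered at $\mathbf{p}$ (oriented towards the attackers). Assume that for all $R>\rho_p$: $T_d(\mathbf{R}_d,R\mathbf{u})\le\bar T_d(\bar\varrho_d(R))$, and $T_a(\mathbf{r},R\mathbf{u},\bar\rho_{ac})\ge(\|\mathbf{r}\|-R-\bar\rho_{ac})/\bar v_a$ whenever $\mathbf{r}=\|\mathbf{r}\|\mathbf{u}$. Define $Dom_{est}=\{\mathbf{r}\in\mathbb{R}^3\setminus\{0\}:\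 \|\mathbf{r}\|\ge\underline{R}_{ac}(\mathbf{r}/\|\mathbf{r}\|)\}$ (over directions where the minimum is attained). Then every attacker-center initial position $\mathbf{r}\in Dom_{est}$ belongs to the defenders' dominance region $Dom(\mathbf{R}_d,\bar\rho_{ac},\Delta T^g_d)$, i.e. there exists $\upsilon\in\big(\frac{\rho_p}{\|\mathbf{r}\|},1-\frac{\bar\rho_{ac}}{\|\mathbf{r}\|}\big)$ such that, with $\mathbf{r}_{df^g}=\upsilon\mathbf{r}$ (a point on the shortest path from $\mathbf{r}$ to the protected area), $T_a(\mathbf{r},\mathbf{r}_{df^g},\bar\rho_{ac})-T_d(\mathbf{R}_d,\mathbf{r}_{df^g})\ge\Delta T^g_d$; that is, the defenders are guaranteed to achieve the planar gathering formation at $\mathbf{r}_{df^g}$ at least $\Delta T^g_d$ before the attackers reach that position.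
   Context: The protected area is the ball of radius $\rho_p$ centered at the origin. $\bar v_a$ is the attackers' maximum speed, $\bar\rho_{ac}$ the maximum connectivity radius of the attacker swarm around its center of mass, $\rho_{sn,p}$ the radius of the defenders' planar gathering formation, and $\Delta T^g_d\ge0$ a user-defined time margin. $\bar T_d(\varrho)=\frac{1}{\lambda_0}\big(\tanh^{-1}(v_{sw}/\bar v_d)+\tan^{-1}(v_{sw}/\bar v_d)\big)$ with $\lambda_0=\sqrt{\bar u_dC_D}$, $\bar v_d=\sqrt{\bar u_d/C_D}$, $v_{sw}=\sqrt{\frac{(\lambda-1)\bar u_d}{(\lambda+1)C_D}}$, $\lambda=e^{2C_D\varrho}$ (time-optimal travel time over distance $\varrho$ from rest under acceleration bound $\bar u_d$ and quadratic drag $C_D$). The dominance region is $Dom(\mathbf{R}_d,\bar\rho_{ac},\Delta T^g_d)=\{\mathbf{r}\in\mathbb{R}^3:\exists\upsilon\in(\rho_p/\|\mathbf{r}\|,1-\bar\rho_{ac}/\|\mathbf{r}\|)\text{ with } T_a(\mathbf{r},\upsilon\mathbf{r},\bar\rho_{ac})-T_d(\mathbf{R}_d,\upsilon\mathbf{r})\ge\Delta T^g_d\}$. *)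

theory Defs
  imports "HOL-Analysis.Analysis"
begin

text \<open>Time-optimal travel time over distance rho from rest, acceleration bound ud,
  quadratic drag CD.\<close>
definition Tbar_d :: "real \<Rightarrow> real \<Rightarrow> real \<Rightarrow> real" where
  "Tbar_d ud CD rho =
     (let lam0 = sqrt (ud * CD);
          vd = sqrt (ud / CD);
          lam = exp (2 * CD * rho);
          vsw = sqrt ((lam - 1) * ud / ((lam + 1) * CD))
      in (artanh (vsw / vd) + arctan (vsw / vd)) / lam0)"

text \<open>Upper estimate of the defenders' travel distance when gathering at R u.\<close>
definition rhobar_d :: "nat \<Rightarrow> nat \<Rightarrow> (nat \<Rightarrow> real^3) \<Rightarrow> real \<Rightarrow> real^3 \<Rightarrow> real \<Rightarrow> real" where
  "rhobar_d Nd \<delta> rd rho_snp u R =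
     (\<Sum>j<Nd. norm (R *\<^sub>R u - rd j) ^ \<delta>) powr (1 / real \<delta>) + rho_snp"

definition f_est :: "real \<Rightarrow> real \<Rightarrow> real \<Rightarrow> real \<Rightarrow> real \<Rightarrow> nat \<Rightarrow> nat \<Rightarrow> (nat \<Rightarrow> real^3)
                     \<Rightarrow> real \<Rightarrow> real^3 \<Rightarrow> real \<Rightarrow> real" where
  "f_est rho_ac va ud CD dT Nd \<delta> rd rho_snp u R =
     rho_ac + R + va * (Tbar_d ud CD (rhobar_d Nd \<delta> rd rho_snp u R) + dT)"

definition Dom_est :: "real \<Rightarrow> real \<Rightarrow> real \<Rightarrow> real \<Rightarrow> real \<Rightarrow> real \<Rightarrow> nat \<Rightarrow> nat
                       \<Rightarrow> (nat \<Rightarrow> real^3) \<Rightarrow> real \<Rightarrow> (real^3) set" where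
  "Dom_est rho_p rho_ac va ud CD dT Nd \<delta> rd rho_snp =
     {r. r \<noteq> 0 \<and>
        (let u = (1 / norm r) *\<^sub>R r;
             f = f_est rho_ac va ud CD dT Nd \<delta> rd rho_snp u
         in \<exists>Rh > rho_p. (\<forall>R > rho_p. f Rh \<le> f R) \<and> norm r \<ge> f Rh)}"

text \<open>Dominance region; Ta r p rho_ac is the attackers' time, Td Rd p the defenders' time.\<close>
definition Dom :: "real \<Rightarrow> (real^3 \<Rightarrow> real^3 \<Rightarrow> real \<Rightarrow> real) \<Rightarrow> ((nat \<Rightarrow> real^3) \<Rightarrow> real^3 \<Rightarrow> real)
                   \<Rightarrow> (nat \<Rightarrow> real^3) \<Rightarrow> real \<Rightarrow> real \<Rightarrow> (real^3) set" where
  "Dom rho_p Ta Td rd rho_ac dT =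
     {r. \<exists>\<upsilon>. rho_p / norm r < \<upsilon> \<and> \<upsilon> < 1 - rho_ac / norm r \<and>
            Ta r (\<upsilon> *\<^sub>R r) rho_ac - Td rd (\<upsilon> *\<^sub>R r) \<ge> dT}"

end

theory Submission
  imports Defs
begin

lemma Tbar_pos:
  assumes "ud > 0" "CD > 0" "rho > 0"
  shows "Tbar_d ud CD rho > 0"
proof -
  define lam where "lam = exp (2 * CD * rho)"
  have lam1: "lam > 1" unfolding lam_def using assms by simp
  define x where "x = sqrt ((lam - 1) * ud / ((lam + 1) * CD)) / sqrt (ud / CD)"
  have "x = sqrt (((lam - 1) * ud / ((lam + 1) * CD)) / (ud / CD))"
    unfolding x_def by (rule real_sqrt_divide[symmetric])
  also have "((lam - 1) * ud / ((lam + 1) * CD)) / (ud / CD) = (lam - 1) / (lam + 1)"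
  proof -
    have "lam + 1 \<noteq> 0" using lam1 by simp
    then show ?thesis using assms by (simp add: divide_simps)
  qed
  finally have xe: "x = sqrt ((lam - 1) / (lam + 1))" .
  have q0: "(lam - 1) / (lam + 1) > 0" and q1: "(lam - 1) / (lam + 1) < 1" using lam1 by auto
  have x0: "x > 0" using xe q0 by simp
  have x1: "x < 1" using xe q1 q0 by (simp add: real_sqrt_lt_1_iff)
  have "artanh x > 0"
  proof -
    have "(1 + x) / (1 - x) > 1" using x0 x1 by (simp add: field_simps)
    then show ?thesis by (simp add: artanh_def)
  qed
  moreover have "arctan x > 0" using x0 by (simp add: arctan_less_zero_iff zero_less_arctan_iff)
  moreover have "sqrt (ud * CD) > 0" using assms by simp
  ultimately have "(artanh x + arctan x) / sqrt (ud * CD) > 0" by (intro divide_pos_pos add_pos_pos)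
  then show ?thesis unfolding Tbar_d_def Let_def x_def[symmetric] lam_def[symmetric] .
qed

theorem theorem1:
  fixes rho_p rho_ac va ud CD rho_snp dT :: real
    and \<delta> Nd :: nat
    and rd :: "nat \<Rightarrow> real^3"
    and Ta :: "real^3 \<Rightarrow> real^3 \<Rightarrow> real \<Rightarrow> real"
    and Td :: "(nat \<Rightarrow> real^3) \<Rightarrow> real^3 \<Rightarrow> real"
  assumes "rho_p > 0" "rho_ac > 0" "va > 0" "ud > 0" "CD > 0" "rho_snp > 0" "dT \<ge> 0"
    and "\<delta> \<ge> 2"
    and Td_bound: "\<And>u R. norm u = 1 \<Longrightarrow> R > rho_p \<Longrightarrow>
            Td rd (R *\<^sub>R u) \<le> Tbar_d ud CD (rhobar_d Nd \<delta> rd rho_snp u R)"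
    and Ta_bound: "\<And>u R r. norm u = 1 \<Longrightarrow> R > rho_p \<Longrightarrow> r = norm r *\<^sub>R u \<Longrightarrow>
            Ta r (R *\<^sub>R u) rho_ac \<ge> (norm r - R - rho_ac) / va"
  shows "Dom_est rho_p rho_ac va ud CD dT Nd \<delta> rd rho_snp \<subseteq> Dom rho_p Ta Td rd rho_ac dT"
  proof
  fix r assume "r \<in> Dom_est rho_p rho_ac va ud CD dT Nd \<delta> rd rho_snp"
  then obtain Rh where r0: "r \<noteq> 0" and Rh: "Rh > rho_p"
    and nr: "norm r \<ge> f_est rho_ac va ud CD dT Nd \<delta> rd rho_snp ((1 / norm r) *\<^sub>R r) Rh"
    unfolding Dom_est_def Let_def by auto
  define n where "n = norm r"
  define u where "u = (1 / n) *\<^sub>R r"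
  have n0: "n > 0" using r0 n_def by simp
  have nu: "norm u = 1" using n0 unfolding u_def n_def by simp
  have ru: "r = norm r *\<^sub>R u" using n0 unfolding u_def n_def by simp
  define T where "T = Tbar_d ud CD (rhobar_d Nd \<delta> rd rho_snp u Rh)"
  have rb: "rhobar_d Nd \<delta> rd rho_snp u Rh > 0"
    unfolding rhobar_d_def using assms(6) by (simp add: add_nonneg_pos)
  have T0: "T > 0" unfolding T_def using Tbar_pos assms(4,5) rb by blast
  have nr': "n \<ge> rho_ac + Rh + va * (T + dT)"
    using nr unfolding f_est_def T_def u_def n_def by simp
  have vpos: "va * (T + dT) > 0" using assms(3,7) T0 by simp
  have vr: "(Rh / n) *\<^sub>R r = Rh *\<^sub>R u" using n0 unfolding u_def by simp
  have ta: "Ta r (Rh *\<^sub>R u) rho_ac \<ge> (n - Rh - rho_ac) / va"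
    using Ta_bound[OF nu Rh ru] n_def by simp
  have td: "Td rd (Rh *\<^sub>R u) \<le> T" using Td_bound[OF nu Rh] T_def by simp
  have "(n - Rh - rho_ac) / va \<ge> va * (T + dT) / va"
    using nr' assms(3) by (intro divide_right_mono) auto
  hence "(n - Rh - rho_ac) / va \<ge> T + dT" using assms(3) by simp
  hence goal: "Ta r (Rh *\<^sub>R u) rho_ac - Td rd (Rh *\<^sub>R u) \<ge> dT" using ta td by linarith
  have a1: "rho_p / norm r < Rh / n" using n0 Rh n_def by (simp add: divide_strict_right_mono)
  have "Rh < n - rho_ac" using nr' vpos by linarith
  hence a2: "Rh / n < 1 - rho_ac / norm r" using n0 n_def by (simp add: field_simps)
  show "r \<in> Dom rho_p Ta Td rd rho_ac dT"
    unfolding Dom_def using a1 a2 goal vr by (intro CollectI exI[of _ "Rh / n"]) simp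
qed


end
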